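(* Let $\mathfrak g$ be the $6$-dimensional real $2$-step nilpotent Lie algebra with a basis $\{e_1,\dots,e_6\}$ whose dual basis $\{e^1,\dots,e^6\}$ satisfies $de^i=0$ for $i=1,\dots,4$, $de^5=e^{13}-e^{24}$, $de^6=e^{14}+e^{23}$ (where $e^{ij}=e^i\wedge e^j$), and let $J$ be the complex structure on $\mathfrak g$ with $Je_1=-e_2$, $Je_2=e_1$, $Je_3=e_4$, $Je_4=-e_3$, $Je_5=e_6$, $Je_6=-e_5$. Let $G$ be the simply connected Lie group with Lie algebra $\mathfrak g$, endowed with the left-invariant complex structure $J$. Then every left-invariant Hermitian metric on $(G,J)$ is an expanding algebraic $HCF_+$ soliton.
   Context: For a Hermitian metric $g$ with Chern connection (curvature $\Omega$, torsion $T$, $T_{js\bar p}=g_{l\bar p}T^l_{js}$), $S(g)_{j\bar k}=g^{\bar rs}\Omega_{s\bar rj\bar k}$, $Q^2(g)_{j\bar k}=g^{\bar pq}g^{\bar rs}T_{sq\bar k}T_{\overline{rp}j}$, $\Theta(g)=S(g)+\frac12Q^2(g)$, and for left-invariant $g$, $\Theta_g$ is the endomorphism of $\mathfrak g$ with $g(\Theta_g\cdot,\cdot)=\Theta(g)$. A left-invariant Hermitian metric $g$ is an algebraic $HCF_+$ soliton if $\Theta_g=c\,\mathrm{Id}+D$ for some $c\in\mathbb R$ and some derivation $D$ of the Lie algebra with $[D,J]=0$; it is expanding if $c<0$. *)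

theory Defs
  imports Complex_Main
begin

text \<open>
Left-invariant objects on a simply connected Lie group are encoded by their values on the Lie
algebra g = R^n with standard basis e_1..e_n (indices 1..n, vectors as functions nat => field,
coordinates outside {1..n} are ignored).  Complexification: the same formulas with complex
coefficients (complex-multilinear extension).
  Bracket:     [e_a,e_b] = sum_c C a b c e_c
  Endomorphism M:  M e_a = sum_b M a b e_b
  Metric:      g(e_a,e_b) = G a b
  Connection:  nabla_{e_a} e_b = sum_c Gamma a b c e_c
\<close>

definition lie :: "(nat \<Rightarrow> nat \<Rightarrow> nat \<Rightarrow> real) \<Rightarrow> nat \<Rightarrow> (nat \<Rightarrow> 'a::real_field) \<Rightarrow> (nat \<Rightarrow> 'a) \<Rightarrow> nat \<Rightarrow> 'a" where
  "lie C n u v = (\<lambda>c. if c \<in> {1..n} then (\<Sum>a=1..n. \<Sum>b=1..n. of_real (C a b c) * u a * v b) else 0)"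

definition conn :: "(nat \<Rightarrow> nat \<Rightarrow> nat \<Rightarrow> real) \<Rightarrow> nat \<Rightarrow> (nat \<Rightarrow> 'a::real_field) \<Rightarrow> (nat \<Rightarrow> 'a) \<Rightarrow> nat \<Rightarrow> 'a" where
  "conn \<Gamma> n u v = (\<lambda>c. if c \<in> {1..n} then (\<Sum>a=1..n. \<Sum>b=1..n. of_real (\<Gamma> a b c) * u a * v b) else 0)"

definition endo :: "(nat \<Rightarrow> nat \<Rightarrow> real) \<Rightarrow> nat \<Rightarrow> (nat \<Rightarrow> 'a::real_field) \<Rightarrow> nat \<Rightarrow> 'a" where
  "endo M n u = (\<lambda>b. if b \<in> {1..n} then (\<Sum>a=1..n. of_real (M a b) * u a) else 0)"

definition gc :: "(nat \<Rightarrow> nat \<Rightarrow> real) \<Rightarrow> nat \<Rightarrow> (nat \<Rightarrow> 'a::real_field) \<Rightarrow> (nat \<Rightarrow> 'a) \<Rightarrow> 'a" where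
  "gc G n u v = (\<Sum>a=1..n. \<Sum>b=1..n. of_real (G a b) * u a * v b)"

definition tors :: "(nat \<Rightarrow> nat \<Rightarrow> nat \<Rightarrow> real) \<Rightarrow> (nat \<Rightarrow> nat \<Rightarrow> nat \<Rightarrow> real) \<Rightarrow> nat \<Rightarrow> (nat \<Rightarrow> 'a::real_field) \<Rightarrow> (nat \<Rightarrow> 'a) \<Rightarrow> nat \<Rightarrow> 'a" where
  "tors C \<Gamma> n u v = (\<lambda>c. conn \<Gamma> n u v c - conn \<Gamma> n v u c - lie C n u v c)"

definition curv :: "(nat \<Rightarrow> nat \<Rightarrow> nat \<Rightarrow> real) \<Rightarrow> (nat \<Rightarrow> nat \<Rightarrow> nat \<Rightarrow> real) \<Rightarrow> nat \<Rightarrow> (nat \<Rightarrow> 'a::real_field) \<Rightarrow> (nat \<Rightarrow> 'a) \<Rightarrow> (nat \<Rightarrow> 'a) \<Rightarrow> nat \<Rightarrow> 'a" where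
  "curv C \<Gamma> n u v w = (\<lambda>c. conn \<Gamma> n u (conn \<Gamma> n v w) c - conn \<Gamma> n v (conn \<Gamma> n u w) c
                           - conn \<Gamma> n (lie C n u v) w c)"

definition hermitian_metric :: "(nat \<Rightarrow> nat \<Rightarrow> real) \<Rightarrow> nat \<Rightarrow> (nat \<Rightarrow> nat \<Rightarrow> real) \<Rightarrow> bool" where
  "hermitian_metric J n G \<longleftrightarrow>
     (\<forall>X Y :: nat \<Rightarrow> real. gc G n X Y = gc G n Y X) \<and>
     (\<forall>X :: nat \<Rightarrow> real. (\<exists>a\<in>{1..n}. X a \<noteq> 0) \<longrightarrow> gc G n X X > 0) \<and>
     (\<forall>X Y :: nat \<Rightarrow> real. gc G n (endo J n X) (endo J n Y) = gc G n X Y)"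

text \<open>Chern connection: the Hermitian connection (nabla g = 0, nabla J = 0) whose torsion has
vanishing (1,1)-part, i.e. T(JX,JY) = -T(X,Y).\<close>
definition chern_connection :: "(nat \<Rightarrow> nat \<Rightarrow> nat \<Rightarrow> real) \<Rightarrow> (nat \<Rightarrow> nat \<Rightarrow> real) \<Rightarrow> (nat \<Rightarrow> nat \<Rightarrow> real) \<Rightarrow> nat \<Rightarrow> (nat \<Rightarrow> nat \<Rightarrow> nat \<Rightarrow> real) \<Rightarrow> bool" where
  "chern_connection C J G n \<Gamma> \<longleftrightarrow>
     (\<forall>a b c. a \<notin> {1..n} \<or> b \<notin> {1..n} \<or> c \<notin> {1..n} \<longrightarrow> \<Gamma> a b c = 0) \<and>
     (\<forall>X Y Z :: nat \<Rightarrow> real. gc G n (conn \<Gamma> n X Y) Z + gc G n Y (conn \<Gamma> n X Z) = 0) \<and>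
     (\<forall>X Y :: nat \<Rightarrow> real. conn \<Gamma> n X (endo J n Y) = endo J n (conn \<Gamma> n X Y)) \<and>
     (\<forall>X Y :: nat \<Rightarrow> real. tors C \<Gamma> n (endo J n X) (endo J n Y) = (\<lambda>c. - tors C \<Gamma> n X Y c))"

definition chern_christoffel :: "(nat \<Rightarrow> nat \<Rightarrow> nat \<Rightarrow> real) \<Rightarrow> (nat \<Rightarrow> nat \<Rightarrow> real) \<Rightarrow> (nat \<Rightarrow> nat \<Rightarrow> real) \<Rightarrow> nat \<Rightarrow> nat \<Rightarrow> nat \<Rightarrow> nat \<Rightarrow> real" where
  "chern_christoffel C J G n = (THE \<Gamma>. chern_connection C J G n \<Gamma>)"

definition cconj :: "(nat \<Rightarrow> complex) \<Rightarrow> nat \<Rightarrow> complex" where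
  "cconj u = (\<lambda>a. cnj (u a))"

text \<open>Index computations use a basis F 1, ..., F m of the (1,0)-vectors (complex vectors in the
complexified Lie algebra); g_{j kbar} = g(F j, conj (F k)).\<close>
definition frame_metric :: "(nat \<Rightarrow> nat \<Rightarrow> real) \<Rightarrow> nat \<Rightarrow> (nat \<Rightarrow> nat \<Rightarrow> complex) \<Rightarrow> nat \<Rightarrow> nat \<Rightarrow> complex" where
  "frame_metric G n F j k = gc G n (F j) (cconj (F k))"

text \<open>inv_frame_metric p q = g^{pbar q}, i.e. sum_q g^{pbar q} g_{q rbar} = delta_{pr}.\<close>
definition inv_frame_metric :: "(nat \<Rightarrow> nat \<Rightarrow> real) \<Rightarrow> nat \<Rightarrow> (nat \<Rightarrow> nat \<Rightarrow> complex) \<Rightarrow> nat \<Rightarrow> nat \<Rightarrow> nat \<Rightarrow> complex" where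
  "inv_frame_metric G n F m = (THE H.
      (\<forall>p q. p \<notin> {1..m} \<or> q \<notin> {1..m} \<longrightarrow> H p q = 0) \<and>
      (\<forall>p\<in>{1..m}. \<forall>r\<in>{1..m}. (\<Sum>q=1..m. H p q * frame_metric G n F q r) = (if p = r then 1 else 0)))"

text \<open>S(g)(u,v) = g^{rbar s} Omega(F s, conj(F r), u, v), with Omega(A,B,U,V) = g(R(A,B)U, V);
so S(g)_{j kbar} = S(g)(F j, conj(F k)).\<close>
definition chern_S :: "(nat \<Rightarrow> nat \<Rightarrow> nat \<Rightarrow> real) \<Rightarrow> (nat \<Rightarrow> nat \<Rightarrow> real) \<Rightarrow> (nat \<Rightarrow> nat \<Rightarrow> real) \<Rightarrow> nat \<Rightarrow> (nat \<Rightarrow> nat \<Rightarrow> complex) \<Rightarrow> nat \<Rightarrow> (nat \<Rightarrow> complex) \<Rightarrow> (nat \<Rightarrow> complex) \<Rightarrow> complex" where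
  "chern_S C J G n F m u v =
     (let \<Gamma> = chern_christoffel C J G n; H = inv_frame_metric G n F m in
      \<Sum>r=1..m. \<Sum>s=1..m. H r s * gc G n (curv C \<Gamma> n (F s) (cconj (F r)) u) v)"

text \<open>Q^2(g)(u,v) = g^{pbar q} g^{rbar s} T(F s, F q, v) T(conj F r, conj F p, u), with
T(A,B,V) = g(T(A,B),V); so T_{sq kbar} = T(F s, F q, conj F k) and
T_{(rp)bar j} = conj T_{rp jbar} = T(conj F r, conj F p, F j).\<close>
definition chern_Q2 :: "(nat \<Rightarrow> nat \<Rightarrow> nat \<Rightarrow> real) \<Rightarrow> (nat \<Rightarrow> nat \<Rightarrow> real) \<Rightarrow> (nat \<Rightarrow> nat \<Rightarrow> real) \<Rightarrow> nat \<Rightarrow> (nat \<Rightarrow> nat \<Rightarrow> complex) \<Rightarrow> nat \<Rightarrow> (nat \<Rightarrow> complex) \<Rightarrow> (nat \<Rightarrow> complex) \<Rightarrow> complex" where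
  "chern_Q2 C J G n F m u v =
     (let \<Gamma> = chern_christoffel C J G n; H = inv_frame_metric G n F m in
      \<Sum>p=1..m. \<Sum>q=1..m. \<Sum>r=1..m. \<Sum>s=1..m.
        H p q * H r s * gc G n (tors C \<Gamma> n (F s) (F q)) v
          * gc G n (tors C \<Gamma> n (cconj (F r)) (cconj (F p))) u)"

definition chern_Theta :: "(nat \<Rightarrow> nat \<Rightarrow> nat \<Rightarrow> real) \<Rightarrow> (nat \<Rightarrow> nat \<Rightarrow> real) \<Rightarrow> (nat \<Rightarrow> nat \<Rightarrow> real) \<Rightarrow> nat \<Rightarrow> (nat \<Rightarrow> nat \<Rightarrow> complex) \<Rightarrow> nat \<Rightarrow> (nat \<Rightarrow> complex) \<Rightarrow> (nat \<Rightarrow> complex) \<Rightarrow> complex" where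
  "chern_Theta C J G n F m u v = chern_S C J G n F m u v + chern_Q2 C J G n F m u v / 2"

definition part10 :: "(nat \<Rightarrow> nat \<Rightarrow> real) \<Rightarrow> nat \<Rightarrow> (nat \<Rightarrow> real) \<Rightarrow> nat \<Rightarrow> complex" where
  "part10 J n X = (\<lambda>a. (complex_of_real (X a) - \<i> * complex_of_real (endo J n X a)) / 2)"

text \<open>Theta(g) as a real symmetric bilinear form on g, with the same convention that relates
g_{j kbar} to g:  Theta(X,Y) = Theta(X^{1,0}, Y^{0,1}) + Theta(Y^{1,0}, X^{0,1}).\<close>
definition Theta_form :: "(nat \<Rightarrow> nat \<Rightarrow> nat \<Rightarrow> real) \<Rightarrow> (nat \<Rightarrow> nat \<Rightarrow> real) \<Rightarrow> (nat \<Rightarrow> nat \<Rightarrow> real) \<Rightarrow> nat \<Rightarrow> (nat \<Rightarrow> nat \<Rightarrow> complex) \<Rightarrow> nat \<Rightarrow> (nat \<Rightarrow> real) \<Rightarrow> (nat \<Rightarrow> real) \<Rightarrow> complex" where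
  "Theta_form C J G n F m X Y =
     chern_Theta C J G n F m (part10 J n X) (cconj (part10 J n Y))
   + chern_Theta C J G n F m (part10 J n Y) (cconj (part10 J n X))"

definition is_derivation :: "(nat \<Rightarrow> nat \<Rightarrow> nat \<Rightarrow> real) \<Rightarrow> nat \<Rightarrow> (nat \<Rightarrow> nat \<Rightarrow> real) \<Rightarrow> bool" where
  "is_derivation C n D \<longleftrightarrow>
     (\<forall>X Y :: nat \<Rightarrow> real. endo D n (lie C n X Y) = (\<lambda>c. lie C n (endo D n X) Y c + lie C n X (endo D n Y) c))"

text \<open>Algebraic HCF_+ soliton with constant c:  Theta_g = c Id + D, where Theta_g is defined by
g(Theta_g X, Y) = Theta(g)(X,Y), D a derivation with [D,J] = 0.\<close>
definition algebraic_HCF_soliton :: "(nat \<Rightarrow> nat \<Rightarrow> nat \<Rightarrow> real) \<Rightarrow> (nat \<Rightarrow> nat \<Rightarrow> real) \<Rightarrow> nat \<Rightarrow> (nat \<Rightarrow> nat \<Rightarrow> complex) \<Rightarrow> nat \<Rightarrow> (nat \<Rightarrow> nat \<Rightarrow> real) \<Rightarrow> real \<Rightarrow> bool" where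
  "algebraic_HCF_soliton C J n F m G c \<longleftrightarrow>
     (\<exists>D. is_derivation C n D \<and>
          (\<forall>X :: nat \<Rightarrow> real. endo D n (endo J n X) = endo J n (endo D n X)) \<and>
          (\<forall>X Y :: nat \<Rightarrow> real.
              complex_of_real (gc G n (\<lambda>a. c * X a + endo D n X a) Y) = Theta_form C J G n F m X Y))"

text \<open>The concrete Lie algebra: de^5 = e^13 - e^24, de^6 = e^14 + e^23, with the convention
d alpha (X,Y) = - alpha([X,Y]); hence [e1,e3] = -e5, [e2,e4] = e5, [e1,e4] = -e6, [e2,e3] = -e6.\<close>
definition g6_bracket :: "nat \<Rightarrow> nat \<Rightarrow> nat \<Rightarrow> real" where
  "g6_bracket a b c =
     (if (a,b,c) = (1,3,5) then -1 else if (a,b,c) = (3,1,5) then 1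
      else if (a,b,c) = (2,4,5) then 1 else if (a,b,c) = (4,2,5) then -1
      else if (a,b,c) = (1,4,6) then -1 else if (a,b,c) = (4,1,6) then 1
      else if (a,b,c) = (2,3,6) then -1 else if (a,b,c) = (3,2,6) then 1 else 0)"

definition g6_J :: "nat \<Rightarrow> nat \<Rightarrow> real" where
  "g6_J a b =
     (if (a,b) = (1,2) then -1 else if (a,b) = (2,1) then 1
      else if (a,b) = (3,4) then 1 else if (a,b) = (4,3) then -1
      else if (a,b) = (5,6) then 1 else if (a,b) = (6,5) then -1 else 0)"

text \<open>A basis of the (1,0)-vectors (J Z = i Z): Z1 = e1 + i e2, Z2 = e3 - i e4, Z3 = e5 - i e6.\<close>
definition g6_frame :: "nat \<Rightarrow> nat \<Rightarrow> complex" where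
  "g6_frame j a =
     (if j = 1 then (if a = 1 then 1 else if a = 2 then \<i> else 0)
      else if j = 2 then (if a = 3 then 1 else if a = 4 then - \<i> else 0)
      else if j = 3 then (if a = 5 then 1 else if a = 6 then - \<i> else 0)
      else 0)"

end

theory Submission
  imports Defs
begin
declare One_nat_def [simp del]
lemma sum6: "(\<Sum>a=1..6. (f::nat\<Rightarrow>_) a) = f 1 + f 2 + f 3 + f 4 + f 5 + (f 6::'a::comm_monoid_add)"
  by (simp add: numeral_eq_Suc add.assoc One_nat_def)
lemma sum3: "(\<Sum>a=1..3. (f::nat\<Rightarrow>_) a) = f 1 + f 2 + (f 3::'a::comm_monoid_add)"
  by (simp add: numeral_eq_Suc add.assoc One_nat_def)

definition E :: "nat \<Rightarrow> nat \<Rightarrow> real" where "E a = (\<lambda>i. if i = a then 1 else 0)"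
definition sv :: "nat \<Rightarrow> real \<Rightarrow> nat \<Rightarrow> real" where "sv p s = (\<lambda>i. if i = p then s else 0)"

definition Grel :: "(nat \<Rightarrow> nat \<Rightarrow> real) \<Rightarrow> bool" where
"Grel G \<longleftrightarrow> G 2 2 = G 1 1 \<and> G 4 4 = G 3 3 \<and> G 6 6 = G 5 5 \<and>
  G 1 2 = 0 \<and> G 2 1 = 0 \<and> G 3 4 = 0 \<and> G 4 3 = 0 \<and> G 5 6 = 0 \<and> G 6 5 = 0 \<and>
  G 2 4 = - G 1 3 \<and> G 2 3 = G 1 4 \<and> G 3 1 = G 1 3 \<and> G 4 1 = G 1 4 \<and> G 4 2 = - G 1 3 \<and> G 3 2 = G 1 4 \<and>
  G 2 6 = - G 1 5 \<and> G 2 5 = G 1 6 \<and> G 5 1 = G 1 5 \<and> G 6 1 = G 1 6 \<and> G 6 2 = - G 1 5 \<and> G 5 2 = G 1 6 \<and>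
  G 4 6 = G 3 5 \<and> G 4 5 = - G 3 6 \<and> G 5 3 = G 3 5 \<and> G 6 3 = G 3 6 \<and> G 6 4 = G 3 5 \<and> G 5 4 = - G 3 6"

lemma gc_sv: "p \<in> {1..n} \<Longrightarrow> q \<in> {1..n} \<Longrightarrow> gc G n (sv p s) (sv q t) = s * t * G p q"
  unfolding gc_def sv_def
  by (simp add: if_distrib[where f="\<lambda>x. _ * x"] if_distrib[where f="\<lambda>x. x * _"] sum.delta cong: if_cong)

lemma E_sv: "E a = sv a 1" by (simp add: E_def sv_def)

lemma endo_sv: "p \<in> {1..n} \<Longrightarrow> endo M n (sv p s) = (\<lambda>b. if b \<in> {1..n} then of_real (M p b) * s else 0)"
  unfolding endo_def sv_def
  by (simp add: if_distrib[where f="\<lambda>x. _ * x"] sum.delta cong: if_cong)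

lemma endo_J_sv1: "endo g6_J 6 (sv 1 s) = sv 2 (-s)"
  by (subst endo_sv) (auto intro!: ext simp: sv_def g6_J_def)
lemma endo_J_sv2: "endo g6_J 6 (sv 2 s) = sv 1 s"
  by (subst endo_sv) (auto intro!: ext simp: sv_def g6_J_def)
lemma endo_J_sv3: "endo g6_J 6 (sv 3 s) = sv 4 s"
  by (subst endo_sv) (auto intro!: ext simp: sv_def g6_J_def)
lemma endo_J_sv4: "endo g6_J 6 (sv 4 s) = sv 3 (-s)"
  by (subst endo_sv) (auto intro!: ext simp: sv_def g6_J_def)
lemma endo_J_sv5: "endo g6_J 6 (sv 5 s) = sv 6 s"
  by (subst endo_sv) (auto intro!: ext simp: sv_def g6_J_def)
lemma endo_J_sv6: "endo g6_J 6 (sv 6 s) = sv 5 (-s)"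
  by (subst endo_sv) (auto intro!: ext simp: sv_def g6_J_def)
lemmas endo_J_sv = endo_J_sv1 endo_J_sv2 endo_J_sv3 endo_J_sv4 endo_J_sv5 endo_J_sv6

lemma hm_Grel:
  assumes "hermitian_metric g6_J 6 G"
  shows "Grel G"
proof -
  have S: "\<And>a b. gc G 6 (sv a 1) (sv b 1) = gc G 6 (sv b 1) (sv a 1)"
   and J: "\<And>a b. gc G 6 (endo g6_J 6 (sv a 1)) (endo g6_J 6 (sv b 1)) = gc G 6 (sv a 1) (sv b 1)"
    using assms unfolding hermitian_metric_def by blast+
  show ?thesis unfolding Grel_def
    using S[of 1 2] S[of 1 3] S[of 1 4] S[of 1 5] S[of 1 6] S[of 2 3] S[of 2 4] S[of 2 5] S[of 2 6]
      S[of 3 4] S[of 3 5] S[of 3 6] S[of 4 5] S[of 4 6] S[of 5 6]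
      J[of 1 1] J[of 3 3] J[of 5 5] J[of 1 2] J[of 3 4] J[of 5 6] J[of 1 3] J[of 1 4] J[of 1 5] J[of 1 6]
      J[of 3 5] J[of 3 6]
    unfolding endo_J_sv by (simp add: gc_sv)
qed

definition fr :: "complex \<Rightarrow> complex \<Rightarrow> complex \<Rightarrow> complex \<Rightarrow> complex \<Rightarrow> complex \<Rightarrow> nat \<Rightarrow> complex" where
  "fr x1 x2 x3 y1 y2 y3 = (\<lambda>a. if a = 1 then x1 + y1 else if a = 2 then \<i> * x1 - \<i> * y1
     else if a = 3 then x2 + y2 else if a = 4 then \<i> * y2 - \<i> * x2
     else if a = 5 then x3 + y3 else if a = 6 then \<i> * y3 - \<i> * x3 else 0)"

definition al1 :: "(nat \<Rightarrow> complex) \<Rightarrow> complex" where "al1 u = (u 1 - \<i> * u 2) / 2"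
definition al2 :: "(nat \<Rightarrow> complex) \<Rightarrow> complex" where "al2 u = (u 3 + \<i> * u 4) / 2"
definition al3 :: "(nat \<Rightarrow> complex) \<Rightarrow> complex" where "al3 u = (u 5 + \<i> * u 6) / 2"
definition be1 :: "(nat \<Rightarrow> complex) \<Rightarrow> complex" where "be1 u = (u 1 + \<i> * u 2) / 2"
definition be2 :: "(nat \<Rightarrow> complex) \<Rightarrow> complex" where "be2 u = (u 3 - \<i> * u 4) / 2"
definition be3 :: "(nat \<Rightarrow> complex) \<Rightarrow> complex" where "be3 u = (u 5 - \<i> * u 6) / 2"

lemmas albe_defs = al1_def al2_def al3_def be1_def be2_def be3_def

lemma albe_fr[simp]:
  "al1 (fr x1 x2 x3 y1 y2 y3) = x1" "al2 (fr x1 x2 x3 y1 y2 y3) = x2" "al3 (fr x1 x2 x3 y1 y2 y3) = x3"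
  "be1 (fr x1 x2 x3 y1 y2 y3) = y1" "be2 (fr x1 x2 x3 y1 y2 y3) = y2" "be3 (fr x1 x2 x3 y1 y2 y3) = y3"
  by (simp_all add: albe_defs fr_def field_simps)

lemma six_cases: "a \<in> {1..6::nat} \<Longrightarrow> a = 1 \<or> a = 2 \<or> a = 3 \<or> a = 4 \<or> a = 5 \<or> a = 6"
  by auto

lemma fr_albe: "a \<in> {1..6} \<Longrightarrow> u a = fr (al1 u) (al2 u) (al3 u) (be1 u) (be2 u) (be3 u) a"
  by (drule six_cases) (auto simp: albe_defs fr_def field_simps)

abbreviation hh :: "(nat \<Rightarrow> nat \<Rightarrow> real) \<Rightarrow> nat \<Rightarrow> nat \<Rightarrow> complex" where
  "hh G \<equiv> frame_metric G 6 g6_frame"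

lemma hh_vals:
  assumes "Grel G"
  shows "hh G 1 1 = 2 * G 1 1" "hh G 2 2 = 2 * G 3 3" "hh G 3 3 = 2 * G 5 5"
   "hh G 1 2 = 2 * G 1 3 + 2 * \<i> * G 1 4" "hh G 2 1 = 2 * G 1 3 - 2 * \<i> * G 1 4"
   "hh G 1 3 = 2 * G 1 5 + 2 * \<i> * G 1 6" "hh G 3 1 = 2 * G 1 5 - 2 * \<i> * G 1 6"
   "hh G 2 3 = 2 * G 3 5 + 2 * \<i> * G 3 6" "hh G 3 2 = 2 * G 3 5 - 2 * \<i> * G 3 6"
  using assms unfolding Grel_def frame_metric_def gc_def cconj_def g6_frame_def sum6
  by (simp_all add: algebra_simps)

lemma gc_fr:
  assumes "Grel G"
  shows "gc G 6 (fr x1 x2 x3 y1 y2 y3) (fr x1' x2' x3' y1' y2' y3') =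
    x1 * (y1' * hh G 1 1 + y2' * hh G 1 2 + y3' * hh G 1 3)
  + x2 * (y1' * hh G 2 1 + y2' * hh G 2 2 + y3' * hh G 2 3)
  + x3 * (y1' * hh G 3 1 + y2' * hh G 3 2 + y3' * hh G 3 3)
  + y1 * (x1' * hh G 1 1 + x2' * hh G 2 1 + x3' * hh G 3 1)
  + y2 * (x1' * hh G 1 2 + x2' * hh G 2 2 + x3' * hh G 3 2)
  + y3 * (x1' * hh G 1 3 + x2' * hh G 2 3 + x3' * hh G 3 3)"
  using assms unfolding hh_vals[OF assms] 
  unfolding Grel_def gc_def fr_def sum6
  by (simp add: algebra_simps)

lemma gc_cong: "(\<And>a. a \<in> {1..n} \<Longrightarrow> u a = u' a) \<Longrightarrow> (\<And>a. a \<in> {1..n} \<Longrightarrow> v a = v' a) \<Longrightarrow> gc G n u v = gc G n u' v'"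
  unfolding gc_def by (intro sum.cong refl) auto
lemma conn_cong: "(\<And>a. a \<in> {1..n} \<Longrightarrow> u a = u' a) \<Longrightarrow> (\<And>a. a \<in> {1..n} \<Longrightarrow> v a = v' a) \<Longrightarrow> conn \<Gamma> n u v = conn \<Gamma> n u' v'"
  unfolding conn_def by (intro ext if_cong sum.cong refl) auto
lemma lie_cong: "(\<And>a. a \<in> {1..n} \<Longrightarrow> u a = u' a) \<Longrightarrow> (\<And>a. a \<in> {1..n} \<Longrightarrow> v a = v' a) \<Longrightarrow> lie C n u v = lie C n u' v'"
  unfolding lie_def by (intro ext if_cong sum.cong refl) auto
lemma endo_cong: "(\<And>a. a \<in> {1..n} \<Longrightarrow> u a = u' a) \<Longrightarrow> endo M n u = endo M n u'"
  unfolding endo_def by (intro ext if_cong sum.cong refl) auto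

abbreviation rs :: "(nat \<Rightarrow> complex) \<Rightarrow> nat \<Rightarrow> complex" where
  "rs u \<equiv> fr (al1 u) (al2 u) (al3 u) (be1 u) (be2 u) (be3 u)"

lemma gc_al:
  assumes "Grel G"
  shows "gc G 6 u v =
    al1 u * (be1 v * hh G 1 1 + be2 v * hh G 1 2 + be3 v * hh G 1 3)
  + al2 u * (be1 v * hh G 2 1 + be2 v * hh G 2 2 + be3 v * hh G 2 3)
  + al3 u * (be1 v * hh G 3 1 + be2 v * hh G 3 2 + be3 v * hh G 3 3)
  + be1 u * (al1 v * hh G 1 1 + al2 v * hh G 2 1 + al3 v * hh G 3 1)
  + be2 u * (al1 v * hh G 1 2 + al2 v * hh G 2 2 + al3 v * hh G 3 2)
  + be3 u * (al1 v * hh G 1 3 + al2 v * hh G 2 3 + al3 v * hh G 3 3)"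
proof -
  have "gc G 6 u v = gc G 6 (rs u) (rs v)" by (rule gc_cong) (simp_all add: fr_albe[symmetric])
  then show ?thesis by (simp add: gc_fr[OF assms])
qed

lemma lie_fr:
  "lie g6_bracket 6 (fr x1 x2 x3 y1 y2 y3) (fr x1' x2' x3' y1' y2' y3') =
   fr 0 0 (-2 * (y1 * x2' - x2 * y1')) 0 0 (-2 * (x1 * y2' - y2 * x1'))"
  apply (rule ext)
  subgoal for c
    apply (cases "c \<in> {1..6}")
    subgoal
      apply (drule six_cases)
      apply (elim disjE)
      apply (unfold lie_def sum6)
      apply (simp_all add: fr_def g6_bracket_def algebra_simps)
      done
    subgoal by (auto simp: lie_def fr_def)
    done
  done

lemma lie_al:
  "lie g6_bracket 6 u v = fr 0 0 (-2 * (be1 u * al2 v - al2 u * be1 v)) 0 0 (-2 * (al1 u * be2 v - be2 u * al1 v))"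
proof -
  have "lie g6_bracket 6 u v = lie g6_bracket 6 (rs u) (rs v)" by (rule lie_cong) (simp_all add: fr_albe[symmetric])
  then show ?thesis by (simp add: lie_fr)
qed

lemma endo_J_fr:
  "endo g6_J 6 (fr x1 x2 x3 y1 y2 y3) = fr (\<i>*x1) (\<i>*x2) (\<i>*x3) (-\<i>*y1) (-\<i>*y2) (-\<i>*y3)"
  apply (rule ext)
  subgoal for c
    apply (cases "c \<in> {1..6}")
    subgoal
      apply (drule six_cases)
      apply (elim disjE)
      apply (unfold endo_def sum6)
      apply (simp_all add: fr_def g6_J_def algebra_simps)
      done
    subgoal by (auto simp: endo_def fr_def)
    done
  done

lemma endo_J_al:
  "endo g6_J 6 u = fr (\<i>*al1 u) (\<i>*al2 u) (\<i>*al3 u) (-\<i>*be1 u) (-\<i>*be2 u) (-\<i>*be3 u)"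
proof -
  have "endo g6_J 6 u = endo g6_J 6 (rs u)" by (rule endo_cong) (simp_all add: fr_albe[symmetric])
  then show ?thesis by (simp add: endo_J_fr)
qed

definition dt :: "(nat \<Rightarrow> nat \<Rightarrow> complex) \<Rightarrow> complex" where
  "dt h = h 1 1 * (h 2 2 * h 3 3 - h 2 3 * h 3 2) - h 1 2 * (h 2 1 * h 3 3 - h 2 3 * h 3 1)
        + h 1 3 * (h 2 1 * h 3 2 - h 2 2 * h 3 1)"

definition adj :: "(nat \<Rightarrow> nat \<Rightarrow> complex) \<Rightarrow> nat \<Rightarrow> nat \<Rightarrow> complex" where
  "adj h p q = (if (p,q) = (1,1) then h 2 2 * h 3 3 - h 2 3 * h 3 2
     else if (p,q) = (1,2) then h 1 3 * h 3 2 - h 1 2 * h 3 3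
     else if (p,q) = (1,3) then h 1 2 * h 2 3 - h 1 3 * h 2 2
     else if (p,q) = (2,1) then h 2 3 * h 3 1 - h 2 1 * h 3 3
     else if (p,q) = (2,2) then h 1 1 * h 3 3 - h 1 3 * h 3 1
     else if (p,q) = (2,3) then h 1 3 * h 2 1 - h 1 1 * h 2 3
     else if (p,q) = (3,1) then h 2 1 * h 3 2 - h 2 2 * h 3 1
     else if (p,q) = (3,2) then h 1 2 * h 3 1 - h 1 1 * h 3 2
     else if (p,q) = (3,3) then h 1 1 * h 2 2 - h 1 2 * h 2 1 else 0)"

definition Hm :: "(nat \<Rightarrow> nat \<Rightarrow> complex) \<Rightarrow> nat \<Rightarrow> nat \<Rightarrow> complex" where
  "Hm h p q = adj h p q / dt h"

lemma three_cases: "a \<in> {1..3::nat} \<Longrightarrow> a = 1 \<or> a = 2 \<or> a = 3"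
  by auto

lemma adj_h: "p \<in> {1..3} \<Longrightarrow> r \<in> {1..3} \<Longrightarrow>
   adj h p 1 * h 1 r + adj h p 2 * h 2 r + adj h p 3 * h 3 r = (if p = r then dt h else 0)"
  by (drule three_cases)+ (auto simp: adj_def dt_def algebra_simps)

lemma h_adj: "p \<in> {1..3} \<Longrightarrow> r \<in> {1..3} \<Longrightarrow>
   h p 1 * adj h 1 r + h p 2 * adj h 2 r + h p 3 * adj h 3 r = (if p = r then dt h else 0)"
  by (drule three_cases)+ (auto simp: adj_def dt_def algebra_simps)

lemma Hm_h: "dt h \<noteq> 0 \<Longrightarrow> p \<in> {1..3} \<Longrightarrow> r \<in> {1..3} \<Longrightarrow>
   Hm h p 1 * h 1 r + Hm h p 2 * h 2 r + Hm h p 3 * h 3 r = (if p = r then 1 else 0)"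
proof -
  assume d: "dt h \<noteq> 0" and pr: "p \<in> {1..3}" "r \<in> {1..3}"
  have "Hm h p 1 * h 1 r + Hm h p 2 * h 2 r + Hm h p 3 * h 3 r
      = (adj h p 1 * h 1 r + adj h p 2 * h 2 r + adj h p 3 * h 3 r) / dt h"
    by (simp add: Hm_def add_divide_distrib)
  then show ?thesis using adj_h[OF pr, of h] d by simp
qed

lemma h_Hm: "dt h \<noteq> 0 \<Longrightarrow> p \<in> {1..3} \<Longrightarrow> r \<in> {1..3} \<Longrightarrow>
   h p 1 * Hm h 1 r + h p 2 * Hm h 2 r + h p 3 * Hm h 3 r = (if p = r then 1 else 0)"
proof -
  assume d: "dt h \<noteq> 0" and pr: "p \<in> {1..3}" "r \<in> {1..3}"
  have "h p 1 * Hm h 1 r + h p 2 * Hm h 2 r + h p 3 * Hm h 3 r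
      = (h p 1 * adj h 1 r + h p 2 * adj h 2 r + h p 3 * adj h 3 r) / dt h"
    by (simp add: Hm_def add_divide_distrib)
  then show ?thesis using h_adj[OF pr, of h] d by simp
qed

lemma gc_real_def: "gc G n (X::nat\<Rightarrow>real) Y = (\<Sum>a=1..n. \<Sum>b=1..n. G a b * X a * Y b)"
  by (simp add: gc_def)

lemma gc_nonneg:
  assumes "hermitian_metric J n G"
  shows "gc G n (X::nat\<Rightarrow>real) X \<ge> 0"
proof (cases "\<exists>a\<in>{1..n}. X a \<noteq> 0")
  case True
  then show ?thesis using assms unfolding hermitian_metric_def by (meson less_imp_le)
next
  case False
  then show ?thesis by (simp add: gc_real_def)
qed

lemma gc_cconj:
  assumes "hermitian_metric J n G" "a0 \<in> {1..n}" "w a0 \<noteq> 0"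
  shows "Re (gc G n w (cconj w)) > 0 \<and> Im (gc G n w (cconj w)) = 0"
proof -
  define p where "p = (\<lambda>a. Re (w a))"
  define q where "q = (\<lambda>a. Im (w a))"
  have sym: "gc G n q p = gc G n p q" using assms(1) unfolding hermitian_metric_def by blast
  have re: "Re (gc G n w (cconj w)) = gc G n p p + gc G n q q"
    unfolding gc_def cconj_def p_def q_def
    by (simp add: Re_sum sum.distrib[symmetric] algebra_simps)
  have im: "Im (gc G n w (cconj w)) = gc G n q p - gc G n p q"
    unfolding gc_def cconj_def p_def q_def
    by (simp add: Im_sum sum_subtractf[symmetric] algebra_simps)
  have "p a0 \<noteq> 0 \<or> q a0 \<noteq> 0" using assms(3) unfolding p_def q_def using complex_eqI by force
  then have "gc G n p p > 0 \<or> gc G n q q > 0"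
    using assms(1,2) unfolding hermitian_metric_def by blast
  moreover have "gc G n p p \<ge> 0" "gc G n q q \<ge> 0" using gc_nonneg[OF assms(1)] by auto
  ultimately show ?thesis using re im sym by auto
qed

lemma cconj_fr: "cconj (fr x1 x2 x3 y1 y2 y3) = fr (cnj y1) (cnj y2) (cnj y3) (cnj x1) (cnj x2) (cnj x3)"
  by (rule ext) (simp add: cconj_def fr_def)

lemma hh_herm: assumes "Grel G" shows
  "cnj (hh G 1 1) = hh G 1 1" "cnj (hh G 1 2) = hh G 2 1" "cnj (hh G 1 3) = hh G 3 1"
  "cnj (hh G 2 1) = hh G 1 2" "cnj (hh G 2 2) = hh G 2 2" "cnj (hh G 2 3) = hh G 3 2"
  "cnj (hh G 3 1) = hh G 1 3" "cnj (hh G 3 2) = hh G 2 3" "cnj (hh G 3 3) = hh G 3 3"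
  by (simp_all add: hh_vals[OF assms] complex_eq_iff)

lemma Qform:
  assumes "Grel G"
  shows "gc G 6 (fr x1 x2 x3 0 0 0) (cconj (fr x1 x2 x3 0 0 0)) =
     cnj x1 * (x1 * hh G 1 1 + x2 * hh G 2 1 + x3 * hh G 3 1)
   + cnj x2 * (x1 * hh G 1 2 + x2 * hh G 2 2 + x3 * hh G 3 2)
   + cnj x3 * (x1 * hh G 1 3 + x2 * hh G 2 3 + x3 * hh G 3 3)"
  unfolding cconj_fr gc_fr[OF assms] by (simp add: algebra_simps)

lemma nullvec:
  assumes hm: "hermitian_metric g6_J 6 G" and gr: "Grel G"
    and r1: "x1 * hh G 1 1 + x2 * hh G 2 1 + x3 * hh G 3 1 = 0"
    and r2: "x1 * hh G 1 2 + x2 * hh G 2 2 + x3 * hh G 3 2 = 0"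
    and r3: "x1 * hh G 1 3 + x2 * hh G 2 3 + x3 * hh G 3 3 = 0"
  shows "x1 = 0 \<and> x2 = 0 \<and> x3 = 0"
proof (rule ccontr)
  assume "\<not> ?thesis"
  then have "fr x1 x2 x3 0 0 0 1 \<noteq> 0 \<or> fr x1 x2 x3 0 0 0 3 \<noteq> 0 \<or> fr x1 x2 x3 0 0 0 5 \<noteq> 0"
    by (simp add: fr_def)
  then have "\<exists>a0\<in>{1..6::nat}. fr x1 x2 x3 0 0 0 a0 \<noteq> 0"
    apply (elim disjE)
      apply (rule bexI[of _ 1]; simp)
     apply (rule bexI[of _ 3]; simp)
    apply (rule bexI[of _ 5]; simp)
    done
  then obtain a0 where a0: "a0 \<in> {1..6}" "fr x1 x2 x3 0 0 0 a0 \<noteq> 0" by blast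
  have "Re (gc G 6 (fr x1 x2 x3 0 0 0) (cconj (fr x1 x2 x3 0 0 0))) > 0"
    using gc_cconj[of g6_J 6 G a0 "fr x1 x2 x3 0 0 0"] hm a0 by blast
  moreover have "gc G 6 (fr x1 x2 x3 0 0 0) (cconj (fr x1 x2 x3 0 0 0)) = 0"
    unfolding Qform[OF gr] r1 r2 r3 by simp
  ultimately show False by simp
qed

lemma G55_pos: "hermitian_metric g6_J 6 G \<Longrightarrow> G 5 5 > 0"
proof -
  assume "hermitian_metric g6_J 6 G"
  moreover have "\<exists>a\<in>{1..6::nat}. sv 5 1 a \<noteq> (0::real)" by (rule bexI[of _ 5]) (auto simp: sv_def)
  ultimately have "gc G 6 (sv 5 1) (sv 5 1) > 0" unfolding hermitian_metric_def by blast
  then show ?thesis by (simp add: gc_sv)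
qed

lemma dt_nz:
  assumes hm: "hermitian_metric g6_J 6 G" and gr: "Grel G"
  shows "dt (hh G) \<noteq> 0"
proof
  assume d: "dt (hh G) = 0"
  have rows: "adj (hh G) p 1 = 0 \<and> adj (hh G) p 2 = 0 \<and> adj (hh G) p 3 = 0" if "p \<in> {1..3}" for p
    apply (rule nullvec[OF hm gr])
    using adj_h[OF that, of 1 "hh G"] adj_h[OF that, of 2 "hh G"] adj_h[OF that, of 3 "hh G"] d by auto
  have a11: "adj (hh G) 1 1 = 0" and a21: "adj (hh G) 2 1 = 0" using rows[of 1] rows[of 2] by auto
  have "(0::complex) = 0 \<and> hh G 3 3 = 0 \<and> - hh G 2 3 = 0"
    by (rule nullvec[OF hm gr]) (use a11 a21 in \<open>auto simp: adj_def algebra_simps\<close>)+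
  moreover have "hh G 3 3 = 2 * G 5 5" using hh_vals[OF gr] by simp
  ultimately show False using G55_pos[OF hm] by simp
qed

lemma Hm_diag_pos:
  assumes hm: "hermitian_metric g6_J 6 G" and gr: "Grel G" and p: "p \<in> {1..3}"
  shows "Re (Hm (hh G) p p) > 0 \<and> Im (Hm (hh G) p p) = 0"
proof -
  let ?h = "hh G"
  have d: "dt ?h \<noteq> 0" by (rule dt_nz[OF hm gr])
  let ?w = "fr (Hm ?h p 1) (Hm ?h p 2) (Hm ?h p 3) 0 0 0"
  have e: "\<And>r. r \<in> {1..3} \<Longrightarrow> Hm ?h p 1 * ?h 1 r + Hm ?h p 2 * ?h 2 r + Hm ?h p 3 * ?h 3 r = (if p = r then 1 else 0)"
    using Hm_h[OF d p] by blast
  have Q: "gc G 6 ?w (cconj ?w) = cnj (Hm ?h p p)"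
    unfolding Qform[OF gr] using e[of 1] e[of 2] e[of 3] three_cases[OF p]
    by (elim disjE; simp)
  have "\<exists>a0\<in>{1..6::nat}. ?w a0 \<noteq> 0"
  proof (rule ccontr)
    assume "\<not> ?thesis"
    then have "?w 1 = 0" "?w 3 = 0" "?w 5 = 0" by auto
    then have "Hm ?h p 1 = 0" "Hm ?h p 2 = 0" "Hm ?h p 3 = 0" by (auto simp: fr_def)
    then show False using e[OF p] by simp
  qed
  then obtain a0 where "a0 \<in> {1..6}" "?w a0 \<noteq> 0" by blast
  then have "Re (gc G 6 ?w (cconj ?w)) > 0 \<and> Im (gc G 6 ?w (cconj ?w)) = 0"
    using gc_cconj[of g6_J 6 G a0 ?w] hm by blast
  then show ?thesis unfolding Q by simp
qed

definition Hf :: "(nat \<Rightarrow> nat \<Rightarrow> real) \<Rightarrow> nat \<Rightarrow> nat \<Rightarrow> complex" where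
  "Hf G = (\<lambda>p q. if p \<in> {1..3} \<and> q \<in> {1..3} then Hm (hh G) p q else 0)"

lemma inv_fm:
  assumes hm: "hermitian_metric g6_J 6 G" and gr: "Grel G"
  shows "inv_frame_metric G 6 g6_frame 3 = Hf G"
proof -
  let ?h = "hh G"
  have d: "dt ?h \<noteq> 0" by (rule dt_nz[OF hm gr])
  let ?P = "\<lambda>H. (\<forall>p q. p \<notin> {1..3} \<or> q \<notin> {1..3} \<longrightarrow> H p q = 0) \<and>
      (\<forall>p\<in>{1..3}. \<forall>r\<in>{1..3}. (\<Sum>q=1..3. H p q * frame_metric G 6 g6_frame q r) = (if p = r then 1 else 0))"
  have "?P (Hf G)"
    unfolding sum3 Hf_def using Hm_h[OF d] by auto
  moreover have "H' = Hf G" if "?P H'" for H'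
  proof (rule ext, rule ext)
    fix p q
    show "H' p q = Hf G p q"
    proof (cases "p \<in> {1..3} \<and> q \<in> {1..3}")
      case False
      then show ?thesis using that unfolding Hf_def by auto
    next
      case True
      then have p: "p \<in> {1..3}" and q: "q \<in> {1..3}" by auto
      have e1: "H' p 1 * ?h 1 s + H' p 2 * ?h 2 s + H' p 3 * ?h 3 s = (if p = s then 1 else 0)"
        if "s \<in> {1..3}" for s using that p \<open>?P H'\<close> unfolding sum3 by auto
      have e2: "?h r 1 * Hm ?h 1 q + ?h r 2 * Hm ?h 2 q + ?h r 3 * Hm ?h 3 q = (if r = q then 1 else 0)"
        if "r \<in> {1..3}" for r using h_Hm[OF d that q] .
      have "H' p q = H' p 1 * (?h 1 1 * Hm ?h 1 q + ?h 1 2 * Hm ?h 2 q + ?h 1 3 * Hm ?h 3 q)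
          + H' p 2 * (?h 2 1 * Hm ?h 1 q + ?h 2 2 * Hm ?h 2 q + ?h 2 3 * Hm ?h 3 q)
          + H' p 3 * (?h 3 1 * Hm ?h 1 q + ?h 3 2 * Hm ?h 2 q + ?h 3 3 * Hm ?h 3 q)"
        unfolding e2[of 1, simplified] e2[of 2, simplified] e2[of 3, simplified] using three_cases[OF q]
        by (elim disjE; simp)
      also have "\<dots> = (H' p 1 * ?h 1 1 + H' p 2 * ?h 2 1 + H' p 3 * ?h 3 1) * Hm ?h 1 q
          + (H' p 1 * ?h 1 2 + H' p 2 * ?h 2 2 + H' p 3 * ?h 3 2) * Hm ?h 2 q
          + (H' p 1 * ?h 1 3 + H' p 2 * ?h 2 3 + H' p 3 * ?h 3 3) * Hm ?h 3 q"
        by (simp add: algebra_simps)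
      also have "\<dots> = Hm ?h p q"
        unfolding e1[of 1, simplified] e1[of 2, simplified] e1[of 3, simplified] using three_cases[OF p]
        by (elim disjE; simp)
      finally show ?thesis unfolding Hf_def using p q by simp
    qed
  qed
  ultimately show ?thesis unfolding inv_frame_metric_def by (rule the_equality)
qed



lemma Hm_herm:
  assumes gr: "Grel G"
  shows "cnj (Hm (hh G) p q) = Hm (hh G) q p"
proof -
  note hv = hh_vals[OF gr]
  have hc: "cnj (hh G 1 1) = hh G 1 1" "cnj (hh G 1 2) = hh G 2 1" "cnj (hh G 1 3) = hh G 3 1"
  "cnj (hh G 2 1) = hh G 1 2" "cnj (hh G 2 2) = hh G 2 2" "cnj (hh G 2 3) = hh G 3 2"
  "cnj (hh G 3 1) = hh G 1 3" "cnj (hh G 3 2) = hh G 2 3" "cnj (hh G 3 3) = hh G 3 3"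
    using hh_herm[OF gr] by auto
  have "cnj (dt (hh G)) = dt (hh G)" unfolding dt_def by (simp add: hc algebra_simps)
  moreover have "cnj (adj (hh G) p q) = adj (hh G) q p"
  proof (cases "p \<in> {1..3} \<and> q \<in> {1..3}")
    case True
    then have "p = 1 \<or> p = 2 \<or> p = 3" "q = 1 \<or> q = 2 \<or> q = 3" using three_cases by auto
    then show ?thesis
      by (elim disjE; simp add: adj_def hc algebra_simps)
  next
    case False
    then have "(p \<noteq> 1 \<and> p \<noteq> 2 \<and> p \<noteq> 3) \<or> (q \<noteq> 1 \<and> q \<noteq> 2 \<and> q \<noteq> 3)" by auto
    then show ?thesis by (elim disjE conjE; simp add: adj_def)
  qed
  ultimately show ?thesis unfolding Hm_def by simp
qed

definition Ec :: "nat \<Rightarrow> nat \<Rightarrow> complex" where "Ec a = (\<lambda>i. if i = a then 1 else 0)"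
definition cx :: "(nat \<Rightarrow> real) \<Rightarrow> nat \<Rightarrow> complex" where "cx X = (\<lambda>a. complex_of_real (X a))"

definition Af :: "(nat \<Rightarrow> nat \<Rightarrow> real) \<Rightarrow> (nat \<Rightarrow> complex) \<Rightarrow> complex" where
  "Af G v = al1 v * hh G 1 3 + al2 v * hh G 2 3 + al3 v * hh G 3 3"
definition Bf :: "(nat \<Rightarrow> nat \<Rightarrow> real) \<Rightarrow> (nat \<Rightarrow> complex) \<Rightarrow> complex" where
  "Bf G v = be1 v * hh G 3 1 + be2 v * hh G 3 2 + be3 v * hh G 3 3"

abbreviation HH :: "(nat \<Rightarrow> nat \<Rightarrow> real) \<Rightarrow> nat \<Rightarrow> nat \<Rightarrow> complex" where
  "HH G \<equiv> Hm (hh G)"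

definition cN :: "(nat \<Rightarrow> nat \<Rightarrow> real) \<Rightarrow> (nat \<Rightarrow> complex) \<Rightarrow> (nat \<Rightarrow> complex) \<Rightarrow> nat \<Rightarrow> complex" where
  "cN G u v = fr (2 * al1 u * Af G v * HH G 2 1) (2 * al1 u * Af G v * HH G 2 2)
        (2 * al1 u * Af G v * HH G 2 3 - 2 * be1 u * al2 v)
        (2 * be1 u * Bf G v * HH G 1 2) (2 * be1 u * Bf G v * HH G 2 2)
        (2 * be1 u * Bf G v * HH G 3 2 - 2 * al1 u * be2 v)"

definition Gam :: "(nat \<Rightarrow> nat \<Rightarrow> real) \<Rightarrow> nat \<Rightarrow> nat \<Rightarrow> nat \<Rightarrow> real" where
  "Gam G a b c = (if a \<in> {1..6} \<and> b \<in> {1..6} \<and> c \<in> {1..6} then Re (cN G (Ec a) (Ec b) c) else 0)"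

lemma cnj_al: "cnj (al1 u) = be1 (cconj u)" "cnj (al2 u) = be2 (cconj u)" "cnj (al3 u) = be3 (cconj u)"
  "cnj (be1 u) = al1 (cconj u)" "cnj (be2 u) = al2 (cconj u)" "cnj (be3 u) = al3 (cconj u)"
  by (simp_all add: albe_defs cconj_def)

lemma cconj_Ec: "cconj (Ec a) = Ec a" by (rule ext) (simp add: cconj_def Ec_def)

lemma cnj_cN:
  assumes gr: "Grel G"
  shows "cnj (cN G u v c) = cN G (cconj u) (cconj v) c"
proof -
  have "cconj (cN G u v) = cN G (cconj u) (cconj v)"
    unfolding cN_def Af_def Bf_def cconj_fr
    by (simp add: cnj_al hh_herm[OF gr] Hm_herm[OF gr])
  then show ?thesis by (metis cconj_def)
qed

lemma real_of_cnj: "cnj z = z \<Longrightarrow> complex_of_real (Re z) = z"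
  by (simp add: complex_eq_iff)

lemma cN_real: "Grel G \<Longrightarrow> complex_of_real (Re (cN G (Ec a) (Ec b) c)) = cN G (Ec a) (Ec b) c"
  using cnj_cN[of G "Ec a" "Ec b" c] unfolding cconj_Ec by (intro real_of_cnj)

lemma fr_out: "c \<notin> {1..6} \<Longrightarrow> fr x1 x2 x3 y1 y2 y3 c = 0"
  by (auto simp: fr_def)

lemma cN_bil: "c \<in> {1..6} \<Longrightarrow> (\<Sum>a=1..6. \<Sum>b=1..6. cN G (Ec a) (Ec b) c * u a * v b) = cN G u v c"
  apply (drule six_cases)
  apply (elim disjE; hypsubst)
  apply (unfold sum6 cN_def Af_def Bf_def fr_def Ec_def albe_defs)
  apply (simp_all add: field_simps)
  done

lemma conn_Gam:
  assumes gr: "Grel G"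
  shows "conn (Gam G) 6 u v = cN G u v"
proof (rule ext)
  fix c
  show "conn (Gam G) 6 u v c = cN G u v c"
  proof (cases "c \<in> {1..6}")
    case True
    have "conn (Gam G) 6 u v c = (\<Sum>a=1..6. \<Sum>b=1..6. cN G (Ec a) (Ec b) c * u a * v b)"
      unfolding conn_def using True
      by (auto simp: Gam_def cN_real[OF gr] intro!: sum.cong)
    also have "\<dots> = cN G u v c" using cN_bil[OF True] .
    finally show ?thesis .
  next
    case False
    have "conn (Gam G) 6 u v c = 0" using False by (auto simp: conn_def)
    moreover have "cN G u v c = 0" unfolding cN_def using fr_out[OF False] by simp
    ultimately show ?thesis by simp
  qed
qed

lemma cx_conn: "cx (conn \<Gamma> n X Y) = conn \<Gamma> n (cx X) (cx Y)"
  by (rule ext) (simp add: cx_def conn_def)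
lemma cx_lie: "cx (lie C n X Y) = lie C n (cx X) (cx Y)"
  by (rule ext) (simp add: cx_def lie_def)
lemma cx_endo: "cx (endo M n X) = endo M n (cx X)"
  by (rule ext) (simp add: cx_def endo_def)
lemma cx_gc: "complex_of_real (gc G n X Y) = gc G n (cx X) (cx Y)"
  by (simp add: cx_def gc_def)
lemma cx_tors: "cx (tors C \<Gamma> n X Y) = tors C \<Gamma> n (cx X) (cx Y)"
  unfolding tors_def by (rule ext) (simp add: cx_def conn_def lie_def)
lemma cx_inj: "cx X = cx Y \<Longrightarrow> X = Y"
  unfolding cx_def by (rule ext) (metis of_real_eq_iff)
lemma cx_uminus: "cx (\<lambda>c. - X c) = (\<lambda>c. - cx X c)"
  by (rule ext) (simp add: cx_def)

lemma fr_lin3: "(\<lambda>c. fr a1 a2 a3 a4 a5 a6 c - fr b1 b2 b3 b4 b5 b6 c - fr c1 c2 c3 c4 c5 c6 c)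
   = fr (a1 - b1 - c1) (a2 - b2 - c2) (a3 - b3 - c3) (a4 - b4 - c4) (a5 - b5 - c5) (a6 - b6 - c6)"
  by (rule ext) (simp add: fr_def algebra_simps)
lemma fr_neg: "(\<lambda>c. - fr a1 a2 a3 a4 a5 a6 c) = fr (-a1) (-a2) (-a3) (-a4) (-a5) (-a6)"
  by (rule ext) (simp add: fr_def algebra_simps)

lemma rels:
  assumes hm: "hermitian_metric g6_J 6 G"
  shows "HH G 2 1 * hh G 1 1 + HH G 2 2 * hh G 2 1 + HH G 2 3 * hh G 3 1 = 0"
    "HH G 2 1 * hh G 1 2 + HH G 2 2 * hh G 2 2 + HH G 2 3 * hh G 3 2 = 1"
    "HH G 2 1 * hh G 1 3 + HH G 2 2 * hh G 2 3 + HH G 2 3 * hh G 3 3 = 0"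
    "hh G 1 1 * HH G 1 2 + hh G 1 2 * HH G 2 2 + hh G 1 3 * HH G 3 2 = 0"
    "hh G 2 1 * HH G 1 2 + hh G 2 2 * HH G 2 2 + hh G 2 3 * HH G 3 2 = 1"
    "hh G 3 1 * HH G 1 2 + hh G 3 2 * HH G 2 2 + hh G 3 3 * HH G 3 2 = 0"
proof -
  have gr: "Grel G" by (rule hm_Grel[OF hm])
  have d: "dt (hh G) \<noteq> 0" by (rule dt_nz[OF hm gr])
  show "HH G 2 1 * hh G 1 1 + HH G 2 2 * hh G 2 1 + HH G 2 3 * hh G 3 1 = 0"
    "HH G 2 1 * hh G 1 2 + HH G 2 2 * hh G 2 2 + HH G 2 3 * hh G 3 2 = 1"
    "HH G 2 1 * hh G 1 3 + HH G 2 2 * hh G 2 3 + HH G 2 3 * hh G 3 3 = 0"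
    using Hm_h[OF d, of 2 1] Hm_h[OF d, of 2 2] Hm_h[OF d, of 2 3] by simp_all
  show "hh G 1 1 * HH G 1 2 + hh G 1 2 * HH G 2 2 + hh G 1 3 * HH G 3 2 = 0"
    "hh G 2 1 * HH G 1 2 + hh G 2 2 * HH G 2 2 + hh G 2 3 * HH G 3 2 = 1"
    "hh G 3 1 * HH G 1 2 + hh G 3 2 * HH G 2 2 + hh G 3 3 * HH G 3 2 = 0"
    using h_Hm[OF d, of 1 2] h_Hm[OF d, of 2 2] h_Hm[OF d, of 3 2] by simp_all
qed

lemma Af_cN:
  assumes hm: "hermitian_metric g6_J 6 G"
  shows "Af G (cN G u v) = -2 * be1 u * al2 v * hh G 3 3"
proof -
  have "Af G (cN G u v) = 2 * al1 u * Af G v * (HH G 2 1 * hh G 1 3 + HH G 2 2 * hh G 2 3 + HH G 2 3 * hh G 3 3)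
      - 2 * be1 u * al2 v * hh G 3 3"
    unfolding cN_def Af_def[of G "fr _ _ _ _ _ _"] albe_fr by (simp add: algebra_simps)
  then show ?thesis using rels(3)[OF hm] by simp
qed

lemma Bf_cN:
  assumes hm: "hermitian_metric g6_J 6 G"
  shows "Bf G (cN G u v) = -2 * al1 u * be2 v * hh G 3 3"
proof -
  have "Bf G (cN G u v) = 2 * be1 u * Bf G v * (hh G 3 1 * HH G 1 2 + hh G 3 2 * HH G 2 2 + hh G 3 3 * HH G 3 2)
      - 2 * al1 u * be2 v * hh G 3 3"
    unfolding cN_def Bf_def[of G "fr _ _ _ _ _ _"] albe_fr by (simp add: algebra_simps)
  then show ?thesis using rels(6)[OF hm] by simp
qed

lemma gc_cN:
  assumes hm: "hermitian_metric g6_J 6 G"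
  shows "gc G 6 (cN G u v) w = 2 * al1 u * Af G v * be2 w + 2 * be1 u * Bf G v * al2 w
      - 2 * be1 u * al2 v * Bf G w - 2 * al1 u * be2 v * Af G w"
proof -
  have gr: "Grel G" by (rule hm_Grel[OF hm])
  have "gc G 6 (cN G u v) w =
     2 * al1 u * Af G v * (be1 w * (HH G 2 1 * hh G 1 1 + HH G 2 2 * hh G 2 1 + HH G 2 3 * hh G 3 1)
        + be2 w * (HH G 2 1 * hh G 1 2 + HH G 2 2 * hh G 2 2 + HH G 2 3 * hh G 3 2)
        + be3 w * (HH G 2 1 * hh G 1 3 + HH G 2 2 * hh G 2 3 + HH G 2 3 * hh G 3 3))
   + 2 * be1 u * Bf G v * (al1 w * (hh G 1 1 * HH G 1 2 + hh G 1 2 * HH G 2 2 + hh G 1 3 * HH G 3 2)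
        + al2 w * (hh G 2 1 * HH G 1 2 + hh G 2 2 * HH G 2 2 + hh G 2 3 * HH G 3 2)
        + al3 w * (hh G 3 1 * HH G 1 2 + hh G 3 2 * HH G 2 2 + hh G 3 3 * HH G 3 2))
   - 2 * be1 u * al2 v * Bf G w - 2 * al1 u * be2 v * Af G w"
    unfolding gc_al[OF gr] cN_def albe_fr Af_def[of G w] Bf_def[of G w] by (simp add: algebra_simps)
  then show ?thesis unfolding rels[OF hm] by simp
qed

lemma gc_sym_c:
  assumes gr: "Grel G"
  shows "gc G 6 u v = gc G 6 v (u::nat\<Rightarrow>complex)"
  unfolding gc_al[OF gr] by (simp add: algebra_simps)

lemma metric_cN:
  assumes hm: "hermitian_metric g6_J 6 G"
  shows "gc G 6 (cN G u v) w + gc G 6 v (cN G u w) = 0"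
  unfolding gc_sym_c[OF hm_Grel[OF hm], of v] gc_cN[OF hm] by (simp add: algebra_simps)

lemma al_J: "al1 (endo g6_J 6 u) = \<i> * al1 u" "al2 (endo g6_J 6 u) = \<i> * al2 u" "al3 (endo g6_J 6 u) = \<i> * al3 u"
  "be1 (endo g6_J 6 u) = - \<i> * be1 u" "be2 (endo g6_J 6 u) = - \<i> * be2 u" "be3 (endo g6_J 6 u) = - \<i> * be3 u"
  by (simp_all add: endo_J_al)

lemma J_cN: "cN G u (endo g6_J 6 v) = endo g6_J 6 (cN G u v)"
  unfolding cN_def endo_J_fr albe_fr Af_def Bf_def al_J
  by (simp add: algebra_simps)

lemma tors_cN:
  assumes gr: "Grel G"
  shows "tors g6_bracket (Gam G) 6 u v = fr
     (2 * al1 u * Af G v * HH G 2 1 - 2 * al1 v * Af G u * HH G 2 1)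
     (2 * al1 u * Af G v * HH G 2 2 - 2 * al1 v * Af G u * HH G 2 2)
     (2 * al1 u * Af G v * HH G 2 3 - 2 * be1 u * al2 v - (2 * al1 v * Af G u * HH G 2 3 - 2 * be1 v * al2 u)
        + 2 * (be1 u * al2 v - al2 u * be1 v))
     (2 * be1 u * Bf G v * HH G 1 2 - 2 * be1 v * Bf G u * HH G 1 2)
     (2 * be1 u * Bf G v * HH G 2 2 - 2 * be1 v * Bf G u * HH G 2 2)
     (2 * be1 u * Bf G v * HH G 3 2 - 2 * al1 u * be2 v - (2 * be1 v * Bf G u * HH G 3 2 - 2 * al1 v * be2 u)
        + 2 * (al1 u * be2 v - be2 u * al1 v))"
  unfolding tors_def conn_Gam[OF gr] cN_def lie_al fr_lin3 by (simp add: algebra_simps)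

lemma tors_J:
  assumes gr: "Grel G"
  shows "tors g6_bracket (Gam G) 6 (endo g6_J 6 u) (endo g6_J 6 v) = (\<lambda>c. - tors g6_bracket (Gam G) 6 u (v::nat\<Rightarrow>complex) c)"
  unfolding tors_cN[OF gr] fr_neg al_J Af_def Bf_def
  by (simp add: algebra_simps)

lemma chern_Gam:
  assumes hm: "hermitian_metric g6_J 6 G"
  shows "chern_connection g6_bracket g6_J G 6 (Gam G)"
proof -
  have gr: "Grel G" by (rule hm_Grel[OF hm])
  have m: "gc G 6 (conn (Gam G) 6 X Y) Z + gc G 6 Y (conn (Gam G) 6 X Z) = 0" for X Y Z :: "nat \<Rightarrow> real"
  proof -
    have "complex_of_real (gc G 6 (conn (Gam G) 6 X Y) Z + gc G 6 Y (conn (Gam G) 6 X Z))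
        = gc G 6 (cN G (cx X) (cx Y)) (cx Z) + gc G 6 (cx Y) (cN G (cx X) (cx Z))"
      by (simp only: of_real_add cx_gc cx_conn conn_Gam[OF gr])
    also have "\<dots> = 0" by (rule metric_cN[OF hm])
    finally show ?thesis by (simp only: of_real_eq_0_iff)
  qed
  have j: "conn (Gam G) 6 X (endo g6_J 6 Y) = endo g6_J 6 (conn (Gam G) 6 X Y)" for X Y :: "nat \<Rightarrow> real"
    by (rule cx_inj) (simp add: cx_conn cx_endo conn_Gam[OF gr] J_cN)
  have t: "tors g6_bracket (Gam G) 6 (endo g6_J 6 X) (endo g6_J 6 Y) = (\<lambda>c. - tors g6_bracket (Gam G) 6 X Y c)"
    for X Y :: "nat \<Rightarrow> real"
    by (rule cx_inj) (simp add: cx_tors cx_endo cx_uminus tors_J[OF gr])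
  show ?thesis unfolding chern_connection_def using m j t by (auto simp: Gam_def)
qed



lemma endo_J_real: "endo g6_J 6 (X::nat\<Rightarrow>real) = (\<lambda>b. if b = 1 then X 2 else if b = 2 then - X 1
   else if b = 3 then - X 4 else if b = 4 then X 3 else if b = 5 then - X 6 else if b = 6 then X 5 else 0)"
proof (rule ext)
  fix b
  show "endo g6_J 6 X b = (if b = 1 then X 2 else if b = 2 then - X 1
   else if b = 3 then - X 4 else if b = 4 then X 3 else if b = 5 then - X 6 else if b = 6 then X 5 else 0)"
  proof (cases "b \<in> {1..6}")
    case True
    then show ?thesis using six_cases[OF True] unfolding endo_def sum6 by (elim disjE; simp add: g6_J_def)
  next
    case False
    then have "b \<noteq> 1" "b \<noteq> 2" "b \<noteq> 3" "b \<noteq> 4" "b \<noteq> 5" "b \<noteq> 6" by auto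
    then show ?thesis using False unfolding endo_def by simp
  qed
qed

lemma JJ: "endo g6_J 6 (endo g6_J 6 (X::nat\<Rightarrow>real)) = (\<lambda>c. if c \<in> {1..6} then - X c else 0)"
  unfolding endo_J_real by (rule ext) auto

lemma endo_lin: "endo M n (\<lambda>c. a * (X::nat\<Rightarrow>real) c + b * Y c) = (\<lambda>c. a * endo M n X c + b * endo M n Y c)"
  by (rule ext) (simp add: endo_def sum.distrib sum_distrib_left algebra_simps)

lemma conn_lin1: "conn \<Gamma> n (\<lambda>c. a * (X::nat\<Rightarrow>real) c + b * X' c) Y = (\<lambda>c. a * conn \<Gamma> n X Y c + b * conn \<Gamma> n X' Y c)"
  by (rule ext) (simp add: conn_def sum.distrib sum_distrib_left algebra_simps)

lemma conn_diff: "conn (\<lambda>a b c. \<Gamma>1 a b c - \<Gamma>2 a b c) n (X::nat\<Rightarrow>real) Y = (\<lambda>c. conn \<Gamma>1 n X Y c - conn \<Gamma>2 n X Y c)"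
  by (rule ext) (simp add: conn_def sum_subtractf algebra_simps)

lemma gc_lin1: "gc G n (\<lambda>c. a * (X::nat\<Rightarrow>real) c + b * X' c) Y = a * gc G n X Y + b * gc G n X' Y"
  by (simp add: gc_def sum.distrib sum_distrib_left algebra_simps)
lemma gc_lin2: "gc G n Y (\<lambda>c. a * (X::nat\<Rightarrow>real) c + b * X' c) = a * gc G n Y X + b * gc G n Y X'"
  by (simp add: gc_def sum.distrib sum_distrib_left algebra_simps)

lemma conn_out: "c \<notin> {1..n} \<Longrightarrow> conn \<Gamma> n X Y c = 0" by (auto simp: conn_def)
lemma endo_out: "c \<notin> {1..n} \<Longrightarrow> endo M n X c = 0" by (auto simp: endo_def)

lemma chern_unique:
  assumes hm: "hermitian_metric g6_J 6 G"
    and c1: "chern_connection C g6_J G 6 \<Gamma>1" and c2: "chern_connection C g6_J G 6 \<Gamma>2"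
  shows "\<Gamma>1 = \<Gamma>2"
proof -
  define A where "A = (\<lambda>a b c. \<Gamma>1 a b c - \<Gamma>2 a b c)"
  define T where "T = (\<lambda>X Y. conn A 6 (X::nat\<Rightarrow>real) Y)"
  define J where "J = (\<lambda>X. endo g6_J 6 (X::nat\<Rightarrow>real))"
  have Tdiff: "T X Y = (\<lambda>c. conn \<Gamma>1 6 X Y c - conn \<Gamma>2 6 X Y c)" for X Y
    unfolding T_def A_def conn_diff ..
  have Tout: "c \<notin> {1..6} \<Longrightarrow> T X Y c = 0" for X Y c unfolding T_def by (rule conn_out)
  have Jout: "c \<notin> {1..6} \<Longrightarrow> J X c = 0" for X c unfolding J_def by (rule endo_out)
  have m: "gc G 6 (T X Y) Z + gc G 6 Y (T X Z) = 0" for X Y Z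
  proof -
    have "gc G 6 (T X Y) Z = gc G 6 (conn \<Gamma>1 6 X Y) Z - gc G 6 (conn \<Gamma>2 6 X Y) Z"
      unfolding Tdiff using gc_lin1[of G 6 1 "conn \<Gamma>1 6 X Y" "-1" "conn \<Gamma>2 6 X Y" Z] by simp
    moreover have "gc G 6 Y (T X Z) = gc G 6 Y (conn \<Gamma>1 6 X Z) - gc G 6 Y (conn \<Gamma>2 6 X Z)"
      unfolding Tdiff using gc_lin2[of G 6 Y 1 "conn \<Gamma>1 6 X Z" "-1" "conn \<Gamma>2 6 X Z"] by simp
    moreover have "gc G 6 (conn \<Gamma>1 6 X Y) Z + gc G 6 Y (conn \<Gamma>1 6 X Z) = 0"
      "gc G 6 (conn \<Gamma>2 6 X Y) Z + gc G 6 Y (conn \<Gamma>2 6 X Z) = 0"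
      using c1 c2 unfolding chern_connection_def by blast+
    ultimately show ?thesis by simp
  qed
  have j: "T X (J Y) = J (T X Y)" for X Y
  proof -
    have "conn \<Gamma>1 6 X (J Y) = J (conn \<Gamma>1 6 X Y)" "conn \<Gamma>2 6 X (J Y) = J (conn \<Gamma>2 6 X Y)"
      using c1 c2 unfolding chern_connection_def J_def by blast+
    moreover have "J (\<lambda>c. conn \<Gamma>1 6 X Y c - conn \<Gamma>2 6 X Y c) = (\<lambda>c. J (conn \<Gamma>1 6 X Y) c - J (conn \<Gamma>2 6 X Y) c)"
      unfolding J_def using endo_lin[of g6_J 6 1 "conn \<Gamma>1 6 X Y" "-1" "conn \<Gamma>2 6 X Y"] by simp
    ultimately show ?thesis unfolding Tdiff by simp
  qed
  have t: "T (J X) (J Y) c - T (J Y) (J X) c = - (T X Y c - T Y X c)" for X Y c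
  proof -
    have "tors C \<Gamma>1 6 (J X) (J Y) c = - tors C \<Gamma>1 6 X Y c" "tors C \<Gamma>2 6 (J X) (J Y) c = - tors C \<Gamma>2 6 X Y c"
      using c1 c2 unfolding chern_connection_def J_def by metis+
    then show ?thesis unfolding Tdiff tors_def by simp
  qed
  have JJ': "J (J X) = (\<lambda>c. if c \<in> {1..6} then - X c else 0)" for X unfolding J_def by (rule JJ)
  have Jneg: "J (\<lambda>c. - X c) = (\<lambda>c. - J X c)" for X
    unfolding J_def using endo_lin[of g6_J 6 "-1" X 0 X] by simp
  have Jadd: "J (\<lambda>c. X c + Y c) = (\<lambda>c. J X c + J Y c)" for X Y
    unfolding J_def using endo_lin[of g6_J 6 1 X 1 Y] by simp
  have JJT: "J (J (T X Y)) = (\<lambda>c. - T X Y c)" for X Y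
    unfolding JJ' using Tout by (auto intro!: ext)
  have T1neg: "T (\<lambda>c. - X c) Y = (\<lambda>c. - T X Y c)" for X Y
    unfolding T_def using conn_lin1[of A 6 "-1" X 0 X Y] by simp
  have TJJ: "T (J (J X)) Y = (\<lambda>c. - T X Y c)" for X Y
  proof -
    have "T (J (J X)) Y = T (\<lambda>c. - X c) Y"
      unfolding T_def JJ' by (rule conn_cong) auto
    then show ?thesis using T1neg by simp
  qed
  define P where "P = (\<lambda>X Y c. T X Y c + J (T (J X) Y) c)"
  have Psym: "P X Y = P Y X" for X Y
  proof (rule ext)
    fix c
    have "T (J X) (J Y) c - T (J Y) (J X) c = - (T X Y c - T Y X c)" by (rule t)
    then show "P X Y c = P Y X c" unfolding P_def j by simp
  qed
  have PJ1: "P (J X) Y = (\<lambda>c. - J (P X Y) c)" for X Y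
  proof -
    have "P X Y = (\<lambda>c. T X Y c + J (T (J X) Y) c)" unfolding P_def ..
    then have "J (P X Y) = (\<lambda>c. J (T X Y) c + J (J (T (J X) Y)) c)" using Jadd by simp
    then have "J (P X Y) = (\<lambda>c. J (T X Y) c - T (J X) Y c)" unfolding JJT by simp
    moreover have "P (J X) Y = (\<lambda>c. T (J X) Y c + J (\<lambda>c. - T X Y c) c)" unfolding P_def TJJ ..
    ultimately show ?thesis unfolding Jneg by (auto intro!: ext)
  qed
  have PJ2: "P X (J Y) = J (P X Y)" for X Y
  proof -
    have "P X (J Y) = (\<lambda>c. J (T X Y) c + J (J (T (J X) Y)) c)" unfolding P_def j ..
    also have "\<dots> = J (\<lambda>c. T X Y c + J (T (J X) Y) c)" using Jadd by simp
    finally show ?thesis unfolding P_def by simp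
  qed
  have P0: "P X Y = (\<lambda>c. 0)" for X Y
  proof -
    have "P (J X) Y = P Y (J X)" by (rule Psym)
    also have "\<dots> = J (P Y X)" by (rule PJ2)
    also have "\<dots> = J (P X Y)" using Psym by simp
    finally have "(\<lambda>c. - J (P X Y) c) = J (P X Y)" unfolding PJ1 .
    then have J0: "J (P X Y) c = 0" for c by (metis add.inverse_unique add_eq_0_iff2 neg_equal_zero)
    have "J (P X Y) = (\<lambda>c. 0)" using J0 by (intro ext)
    moreover have "J (\<lambda>c. 0) = (\<lambda>c. 0)" unfolding J_def by (rule ext) (simp add: endo_def)
    ultimately have "J (J (P X Y)) = (\<lambda>c. 0)" by simp
    moreover have "P X Y c = 0" if "c \<notin> {1..6}" for c unfolding P_def using Tout Jout that by simp
    ultimately show ?thesis unfolding JJ' by (auto intro!: ext split: if_splits) (metis neg_equal_0_iff_equal)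
  qed
  have TJ: "T (J X) Y = J (T X Y)" for X Y
  proof -
    have "T X Y c = - J (T (J X) Y) c" for c using fun_cong[OF P0[of X Y], of c] unfolding P_def
      by (simp add: eq_neg_iff_add_eq_0)
    then have "T X Y = (\<lambda>c. - J (T (J X) Y) c)" by (intro ext)
    then have "J (T X Y) = J (\<lambda>c. - J (T (J X) Y) c)" by simp
    also have "\<dots> = (\<lambda>c. - J (J (T (J X) Y)) c)" by (rule Jneg)
    also have "\<dots> = T (J X) Y" unfolding JJT by simp
    finally show ?thesis by simp
  qed
  have inv: "gc G 6 (J U) (J Z) = gc G 6 U Z" for U Z
    using hm unfolding hermitian_metric_def J_def by blast
  have gJ: "gc G 6 (J U) Z = - gc G 6 U (J Z)" for U Z
  proof -
    have "gc G 6 (J U) (J (J Z)) = gc G 6 U (J Z)" by (rule inv)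
    moreover have "gc G 6 (J U) (J (J Z)) = gc G 6 (J U) (\<lambda>c. - Z c)"
      unfolding JJ' by (rule gc_cong) auto
    moreover have "gc G 6 (J U) (\<lambda>c. - Z c) = - gc G 6 (J U) Z"
      using gc_lin2[of G 6 "J U" "-1" Z 0 Z] by simp
    ultimately show ?thesis by simp
  qed
  have key: "gc G 6 Y (J (T X Z)) = 0" for X Y Z
  proof -
    have "gc G 6 (J (T X Y)) Z = gc G 6 (T (J X) Y) Z" unfolding TJ ..
    also have "\<dots> = - gc G 6 Y (T (J X) Z)" using m[of "J X" Y Z] by simp
    also have "\<dots> = - gc G 6 Y (J (T X Z))" unfolding TJ ..
    finally have e1: "gc G 6 (J (T X Y)) Z = - gc G 6 Y (J (T X Z))" .
    have "gc G 6 (J (T X Y)) Z = - gc G 6 (T X Y) (J Z)" by (rule gJ)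
    also have "\<dots> = gc G 6 Y (T X (J Z))" using m[of X Y "J Z"] by simp
    also have "\<dots> = gc G 6 Y (J (T X Z))" unfolding j ..
    finally show ?thesis using e1 by simp
  qed
  have Tz: "T X Y = (\<lambda>c. 0)" for X Y
  proof -
    have "gc G 6 (J (T X Y)) (J (T X Y)) = 0" by (rule key)
    then have "\<forall>a\<in>{1..6}. J (T X Y) a = 0" using hm unfolding hermitian_metric_def
      by (metis less_irrefl)
    then have "J (J (T X Y)) = (\<lambda>c. 0)" unfolding J_def by (auto simp: endo_def intro!: ext)
    then show ?thesis unfolding JJT by (metis neg_equal_0_iff_equal)
  qed
  show ?thesis
  proof (intro ext)
    fix a b c
    show "\<Gamma>1 a b c = \<Gamma>2 a b c"
    proof (cases "a \<in> {1..6} \<and> b \<in> {1..6} \<and> c \<in> {1..6}")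
      case False
      then show ?thesis using c1 c2 unfolding chern_connection_def by metis
    next
      case True
      have "T (sv a 1) (sv b 1) c = A a b c"
        using True unfolding T_def conn_def sv_def
        by (simp add: if_distrib[where f="\<lambda>x. _ * x"] if_distrib[where f="\<lambda>x. x * _"] sum.delta cong: if_cong)
      then show ?thesis using Tz unfolding A_def by (metis eq_iff_diff_eq_0)
    qed
  qed
qed

lemma christoffel_Gam:
  assumes hm: "hermitian_metric g6_J 6 G"
  shows "chern_christoffel g6_bracket g6_J G 6 = Gam G"
  unfolding chern_christoffel_def
proof (rule the_equality)
  show "chern_connection g6_bracket g6_J G 6 (Gam G)" by (rule chern_Gam[OF hm])
  fix x assume "chern_connection g6_bracket g6_J G 6 x"
  then show "x = Gam G" using chern_unique[OF hm _ chern_Gam[OF hm]] by blast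
qed

lemma frame_fr:
  "g6_frame 1 = fr 1 0 0 0 0 0" "g6_frame 2 = fr 0 1 0 0 0 0" "g6_frame 3 = fr 0 0 1 0 0 0"
  by (auto intro!: ext simp: g6_frame_def fr_def)

lemma al_cN: "al1 (cN G u v) = 2 * al1 u * Af G v * HH G 2 1" "al2 (cN G u v) = 2 * al1 u * Af G v * HH G 2 2"
  "al3 (cN G u v) = 2 * al1 u * Af G v * HH G 2 3 - 2 * be1 u * al2 v"
  "be1 (cN G u v) = 2 * be1 u * Bf G v * HH G 1 2" "be2 (cN G u v) = 2 * be1 u * Bf G v * HH G 2 2"
  "be3 (cN G u v) = 2 * be1 u * Bf G v * HH G 3 2 - 2 * al1 u * be2 v"
  by (simp_all add: cN_def)

lemma Af_fr: "Af G (fr x1 x2 x3 y1 y2 y3) = x1 * hh G 1 3 + x2 * hh G 2 3 + x3 * hh G 3 3"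
  by (simp add: Af_def)
lemma Bf_fr: "Bf G (fr x1 x2 x3 y1 y2 y3) = y1 * hh G 3 1 + y2 * hh G 3 2 + y3 * hh G 3 3"
  by (simp add: Bf_def)

lemma gc_sub3: "gc G n (\<lambda>c. f c - g c - k c) (v::nat\<Rightarrow>complex) = gc G n f v - gc G n g v - gc G n k v"
  by (simp add: gc_def sum_subtractf sum.distrib algebra_simps)

lemma curv_Gam:
  assumes gr: "Grel G"
  shows "curv g6_bracket (Gam G) 6 u v w = (\<lambda>c. cN G u (cN G v w) c - cN G v (cN G u w) c - cN G (lie g6_bracket 6 u v) w c)"
  unfolding curv_def conn_Gam[OF gr] ..

lemma tors_Gam:
  assumes gr: "Grel G"
  shows "tors g6_bracket (Gam G) 6 u v = (\<lambda>c. cN G u v c - cN G v u c - lie g6_bracket 6 u v c)"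
  unfolding tors_def conn_Gam[OF gr] ..

lemma chern_S_val:
  assumes hm: "hermitian_metric g6_J 6 G"
  shows "chern_S g6_bracket g6_J G 6 g6_frame 3 u v =
     4 * HH G 1 1 * (HH G 2 2 * (Af G u * Bf G v - Bf G u * Af G v) + hh G 3 3 * (be2 u * al2 v - al2 u * be2 v))"
proof -
  have gr: "Grel G" by (rule hm_Grel[OF hm])
  show ?thesis
    unfolding chern_S_def Let_def christoffel_Gam[OF hm] inv_fm[OF hm gr] sum3 Hf_def
    unfolding curv_Gam[OF gr] gc_sub3 gc_cN[OF hm] Af_cN[OF hm] Bf_cN[OF hm] al_cN
    unfolding frame_fr cconj_fr lie_al
    by (simp add: algebra_simps)
qed

lemma gc_torsZ:
  assumes hm: "hermitian_metric g6_J 6 G"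
  shows "gc G 6 (tors g6_bracket (Gam G) 6 (fr a1 a2 a3 0 0 0) (fr b1 b2 b3 0 0 0)) v
     = 2 * (a1 * Af G (fr b1 b2 b3 0 0 0) - b1 * Af G (fr a1 a2 a3 0 0 0)) * be2 v"
proof -
  have gr: "Grel G" by (rule hm_Grel[OF hm])
  show ?thesis
    unfolding tors_Gam[OF gr] gc_sub3 gc_cN[OF hm] unfolding lie_al gc_al[OF gr] albe_fr
    by (simp add: algebra_simps)
qed

lemma gc_torsZb:
  assumes hm: "hermitian_metric g6_J 6 G"
  shows "gc G 6 (tors g6_bracket (Gam G) 6 (fr 0 0 0 a1 a2 a3) (fr 0 0 0 b1 b2 b3)) v
     = 2 * (a1 * Bf G (fr 0 0 0 b1 b2 b3) - b1 * Bf G (fr 0 0 0 a1 a2 a3)) * al2 v"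
proof -
  have gr: "Grel G" by (rule hm_Grel[OF hm])
  show ?thesis
    unfolding tors_Gam[OF gr] gc_sub3 gc_cN[OF hm] unfolding lie_al gc_al[OF gr] albe_fr
    by (simp add: algebra_simps)
qed

lemma chern_Q2_val:
  assumes hm: "hermitian_metric g6_J 6 G"
  shows "chern_Q2 g6_bracket g6_J G 6 g6_frame 3 u v = 8 * HH G 1 1 * hh G 3 3 * al2 u * be2 v"
proof -
  have gr: "Grel G" by (rule hm_Grel[OF hm])
  have d: "dt (hh G) \<noteq> 0" by (rule dt_nz[OF hm gr])
  have r13: "HH G 1 1 * hh G 1 3 + HH G 1 2 * hh G 2 3 + HH G 1 3 * hh G 3 3 = 0"
    using Hm_h[OF d, of 1 3] by simp
  have r23: "HH G 2 1 * hh G 1 3 + HH G 2 2 * hh G 2 3 + HH G 2 3 * hh G 3 3 = 0"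
    using Hm_h[OF d, of 2 3] by simp
  have r33: "HH G 3 1 * hh G 1 3 + HH G 3 2 * hh G 2 3 + HH G 3 3 * hh G 3 3 = 1"
    using Hm_h[OF d, of 3 3] by simp
  have "chern_Q2 g6_bracket g6_J G 6 g6_frame 3 u v = 4 * al2 u * be2 v *
     (2 * HH G 1 1 * (hh G 3 1 * (HH G 1 1 * hh G 1 3 + HH G 1 2 * hh G 2 3 + HH G 1 3 * hh G 3 3)
        + hh G 3 2 * (HH G 2 1 * hh G 1 3 + HH G 2 2 * hh G 2 3 + HH G 2 3 * hh G 3 3)
        + hh G 3 3 * (HH G 3 1 * hh G 1 3 + HH G 3 2 * hh G 2 3 + HH G 3 3 * hh G 3 3))
      - 2 * (HH G 1 1 * hh G 1 3 + HH G 1 2 * hh G 2 3 + HH G 1 3 * hh G 3 3)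
          * (HH G 1 1 * hh G 3 1 + HH G 2 1 * hh G 3 2 + HH G 3 1 * hh G 3 3))"
    unfolding chern_Q2_def Let_def christoffel_Gam[OF hm] inv_fm[OF hm gr] sum3 Hf_def
    unfolding frame_fr cconj_fr complex_cnj_one complex_cnj_zero gc_torsZ[OF hm] gc_torsZb[OF hm] Af_fr Bf_fr
    by (simp add: algebra_simps)
  then show ?thesis unfolding r13 r23 r33 by simp
qed

lemma chern_Theta_val:
  assumes hm: "hermitian_metric g6_J 6 G"
  shows "chern_Theta g6_bracket g6_J G 6 g6_frame 3 u v =
     4 * HH G 1 1 * (HH G 2 2 * (Af G u * Bf G v - Bf G u * Af G v) + hh G 3 3 * be2 u * al2 v)"
  unfolding chern_Theta_def chern_S_val[OF hm] chern_Q2_val[OF hm] by (simp add: algebra_simps)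

lemma al_p10: "al1 (part10 g6_J 6 X) = al1 (cx X)" "al2 (part10 g6_J 6 X) = al2 (cx X)"
  "al3 (part10 g6_J 6 X) = al3 (cx X)"
  "be1 (part10 g6_J 6 X) = 0" "be2 (part10 g6_J 6 X) = 0" "be3 (part10 g6_J 6 X) = 0"
  by (simp_all add: albe_defs part10_def endo_J_real cx_def field_simps)

lemma cconj_cx: "cconj (cx X) = cx X" by (rule ext) (simp add: cconj_def cx_def)

lemma al_cp10: "al1 (cconj (part10 g6_J 6 X)) = 0" "al2 (cconj (part10 g6_J 6 X)) = 0"
  "al3 (cconj (part10 g6_J 6 X)) = 0"
  "be1 (cconj (part10 g6_J 6 X)) = be1 (cx X)" "be2 (cconj (part10 g6_J 6 X)) = be2 (cx X)"
  "be3 (cconj (part10 g6_J 6 X)) = be3 (cx X)"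
proof -
  have c: "cconj (cconj u) = u" for u by (rule ext) (simp add: cconj_def)
  have e: "al1 (cconj u) = cnj (be1 u)" "al2 (cconj u) = cnj (be2 u)" "al3 (cconj u) = cnj (be3 u)"
     "be1 (cconj u) = cnj (al1 u)" "be2 (cconj u) = cnj (al2 u)" "be3 (cconj u) = cnj (al3 u)" for u
    by (simp_all add: albe_defs cconj_def)
  show "al1 (cconj (part10 g6_J 6 X)) = 0" "al2 (cconj (part10 g6_J 6 X)) = 0"
    "al3 (cconj (part10 g6_J 6 X)) = 0" unfolding e al_p10 by simp_all
  show "be1 (cconj (part10 g6_J 6 X)) = be1 (cx X)" "be2 (cconj (part10 g6_J 6 X)) = be2 (cx X)"
    "be3 (cconj (part10 g6_J 6 X)) = be3 (cx X)"
    unfolding e al_p10 cnj_al cconj_cx by simp_all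
qed

lemma Theta_form_val:
  assumes hm: "hermitian_metric g6_J 6 G"
  shows "Theta_form g6_bracket g6_J G 6 g6_frame 3 X Y =
     4 * HH G 1 1 * HH G 2 2 * (Af G (cx X) * Bf G (cx Y) + Af G (cx Y) * Bf G (cx X))"
  unfolding Theta_form_def chern_Theta_val[OF hm] Af_def Bf_def al_p10 al_cp10
  by (simp add: algebra_simps)

definition alpha :: "(nat \<Rightarrow> nat \<Rightarrow> real) \<Rightarrow> real" where
  "alpha G = 4 * Re (HH G 1 1) * Re (HH G 2 2)"
definition cc :: "(nat \<Rightarrow> nat \<Rightarrow> real) \<Rightarrow> real" where
  "cc G = - alpha G * Re (hh G 3 3)"
definition Dc :: "(nat \<Rightarrow> nat \<Rightarrow> real) \<Rightarrow> (nat \<Rightarrow> complex) \<Rightarrow> nat \<Rightarrow> complex" where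
  "Dc G u = fr (- of_real (cc G) * al1 u) (- of_real (cc G) * al2 u)
     (- of_real (cc G) * al3 u + of_real (alpha G) * Af G u)
     (- of_real (cc G) * be1 u) (- of_real (cc G) * be2 u)
     (- of_real (cc G) * be3 u + of_real (alpha G) * Bf G u)"
definition Dm :: "(nat \<Rightarrow> nat \<Rightarrow> real) \<Rightarrow> nat \<Rightarrow> nat \<Rightarrow> real" where
  "Dm G a b = Re (Dc G (Ec a) b)"

lemma alpha_c:
  assumes hm: "hermitian_metric g6_J 6 G"
  shows "complex_of_real (alpha G) = 4 * HH G 1 1 * HH G 2 2"
proof -
  have gr: "Grel G" by (rule hm_Grel[OF hm])
  have "complex_of_real (Re (HH G 1 1)) = HH G 1 1" "complex_of_real (Re (HH G 2 2)) = HH G 2 2"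
    using Hm_diag_pos[OF hm gr, of 1] Hm_diag_pos[OF hm gr, of 2] by (simp_all add: complex_eq_iff)
  then show ?thesis unfolding alpha_def by simp
qed

lemma h33_real: "Grel G \<Longrightarrow> complex_of_real (Re (hh G 3 3)) = hh G 3 3"
  by (simp add: hh_vals)

lemma cc_rel:
  assumes hm: "hermitian_metric g6_J 6 G"
  shows "complex_of_real (cc G) = - complex_of_real (alpha G) * hh G 3 3"
  unfolding cc_def using h33_real[OF hm_Grel[OF hm]] by simp

lemma cc_neg:
  assumes hm: "hermitian_metric g6_J 6 G"
  shows "cc G < 0"
proof -
  have gr: "Grel G" by (rule hm_Grel[OF hm])
  have "Re (HH G 1 1) > 0" "Re (HH G 2 2) > 0"
    using Hm_diag_pos[OF hm gr, of 1] Hm_diag_pos[OF hm gr, of 2] by simp_all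
  moreover have "Re (hh G 3 3) > 0" using G55_pos[OF hm] by (simp add: hh_vals[OF gr])
  ultimately show ?thesis unfolding cc_def alpha_def by simp
qed

lemma cnj_Af: "Grel G \<Longrightarrow> cnj (Af G u) = Bf G (cconj u)"
  unfolding Af_def Bf_def by (simp add: cnj_al hh_herm)
lemma cnj_Bf: "Grel G \<Longrightarrow> cnj (Bf G u) = Af G (cconj u)"
  unfolding Af_def Bf_def by (simp add: cnj_al hh_herm)

lemma Dc_real: "Grel G \<Longrightarrow> complex_of_real (Re (Dc G (Ec a) b)) = Dc G (Ec a) b"
proof -
  assume gr: "Grel G"
  have "cconj (Dc G u) = Dc G (cconj u)" for u
    unfolding Dc_def cconj_fr by (simp add: cnj_al cnj_Af[OF gr] cnj_Bf[OF gr])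
  then have "cnj (Dc G (Ec a) b) = Dc G (Ec a) b"
    using cconj_Ec[of a] by (metis cconj_def)
  then show ?thesis by (rule real_of_cnj)
qed

lemma Dc_lin: "c \<in> {1..6} \<Longrightarrow> (\<Sum>a=1..6. Dc G (Ec a) c * u a) = Dc G u c"
  apply (drule six_cases)
  apply (elim disjE; hypsubst)
  apply (unfold sum6 Dc_def Af_def Bf_def fr_def Ec_def albe_defs)
  apply (simp_all add: field_simps)
  done

lemma endo_Dm:
  assumes gr: "Grel G"
  shows "endo (Dm G) 6 u = Dc G u"
proof (rule ext)
  fix c
  show "endo (Dm G) 6 u c = Dc G u c"
  proof (cases "c \<in> {1..6}")
    case True
    have "endo (Dm G) 6 u c = (\<Sum>a=1..6. Dc G (Ec a) c * u a)"
      unfolding endo_def using True by (simp add: Dm_def Dc_real[OF gr])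
    also have "\<dots> = Dc G u c" using Dc_lin[OF True] .
    finally show ?thesis .
  next
    case False
    have "endo (Dm G) 6 u c = 0" using False by (auto simp: endo_def)
    moreover have "Dc G u c = 0" unfolding Dc_def using fr_out[OF False] by simp
    ultimately show ?thesis by simp
  qed
qed

lemma fr_add: "(\<lambda>c. fr a1 a2 a3 a4 a5 a6 c + fr b1 b2 b3 b4 b5 b6 c)
   = fr (a1 + b1) (a2 + b2) (a3 + b3) (a4 + b4) (a5 + b5) (a6 + b6)"
  by (rule ext) (simp add: fr_def algebra_simps)

lemma Dc_lie:
  assumes hm: "hermitian_metric g6_J 6 G"
  shows "Dc G (lie g6_bracket 6 u v) = (\<lambda>c. lie g6_bracket 6 (Dc G u) v c + lie g6_bracket 6 u (Dc G v) c)"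
  unfolding lie_al Dc_def albe_fr Af_fr Bf_fr fr_add unfolding cc_rel[OF hm]
  by (simp add: algebra_simps)

lemma Dc_J: "Dc G (endo g6_J 6 u) = endo g6_J 6 (Dc G u)"
  unfolding Dc_def endo_J_fr al_J Af_def Bf_def albe_fr
  by (simp add: algebra_simps)

lemma cx_add: "cx (\<lambda>c. X c + Y c) = (\<lambda>c. cx X c + cx Y c)" by (rule ext) (simp add: cx_def)

lemma albe_lin: "al1 (\<lambda>a. k * w a + f a) = k * al1 w + al1 f" "al2 (\<lambda>a. k * w a + f a) = k * al2 w + al2 f"
  "al3 (\<lambda>a. k * w a + f a) = k * al3 w + al3 f" "be1 (\<lambda>a. k * w a + f a) = k * be1 w + be1 f"
  "be2 (\<lambda>a. k * w a + f a) = k * be2 w + be2 f" "be3 (\<lambda>a. k * w a + f a) = k * be3 w + be3 f"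
  by (simp_all add: albe_defs field_simps)

theorem soliton:
  assumes hm: "hermitian_metric g6_J 6 G"
  shows "algebraic_HCF_soliton g6_bracket g6_J 6 g6_frame 3 G (cc G)"
proof -
  have gr: "Grel G" by (rule hm_Grel[OF hm])
  have der: "is_derivation g6_bracket 6 (Dm G)"
    unfolding is_derivation_def
  proof (intro allI)
    fix X Y :: "nat \<Rightarrow> real"
    show "endo (Dm G) 6 (lie g6_bracket 6 X Y) =
      (\<lambda>c. lie g6_bracket 6 (endo (Dm G) 6 X) Y c + lie g6_bracket 6 X (endo (Dm G) 6 Y) c)"
      by (rule cx_inj) (simp only: cx_add cx_endo cx_lie endo_Dm[OF gr] Dc_lie[OF hm])
  qed
  have jc: "endo (Dm G) 6 (endo g6_J 6 X) = endo g6_J 6 (endo (Dm G) 6 X)" for X :: "nat \<Rightarrow> real"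
    by (rule cx_inj) (simp only: cx_endo endo_Dm[OF gr] Dc_J)
  have fin: "complex_of_real (gc G 6 (\<lambda>a. cc G * X a + endo (Dm G) 6 X a) Y)
       = Theta_form g6_bracket g6_J G 6 g6_frame 3 X Y" for X Y :: "nat \<Rightarrow> real"
  proof -
    have e: "cx (\<lambda>a. cc G * X a + endo (Dm G) 6 X a) = (\<lambda>a. complex_of_real (cc G) * cx X a + Dc G (cx X) a)"
    proof -
      have e0: "cx (endo (Dm G) 6 X) = Dc G (cx X)" by (simp add: cx_endo endo_Dm[OF gr])
      have "complex_of_real (endo (Dm G) 6 X a) = Dc G (cx X) a" for a
        using fun_cong[OF e0, of a] by (simp add: cx_def)
      then show ?thesis by (auto simp: cx_def intro!: ext)
    qed
    show ?thesis
      unfolding cx_gc e Theta_form_val[OF hm] gc_al[OF gr] albe_lin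
      unfolding Dc_def albe_fr alpha_c[OF hm, symmetric] Af_def Bf_def
      by (simp add: algebra_simps)
  qed
  show ?thesis unfolding algebraic_HCF_soliton_def using der jc fin by blast
qed


theorem proposition4p4:
  fixes G :: "nat \<Rightarrow> nat \<Rightarrow> real"
  assumes "hermitian_metric g6_J 6 G"
  shows "\<exists>c<0. algebraic_HCF_soliton g6_bracket g6_J 6 g6_frame 3 G c"
  using soliton[OF assms] cc_neg[OF assms] by blast

end
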